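(* Let $b\ge 0$ be an integer and let $S$ be a nonempty subset of $\mathbb{Z}$. If $\mathbf{a}_1$ and $\mathbf{a}_2$ are two $b$-orderings of $S$, then $$\alpha_i(S,b,\mathbf{a}_1)=\alpha_i(S,b,\mathbf{a}_2)\quad\text{for all } i=0,1,2,\dots.$$
   Context: $\mathbb{N}=\{0,1,2,\dots\}$. For an integer $b\ge0$ and $a\in\mathbb{Z}$ define $\operatorname{ord}_b(a):=\sup\{k\in\mathbb{N}: a\mathbb{Z}\subseteq b^k\mathbb{Z}\}\in\mathbb{N}\cup\{+\infty\}$, with the convention $0^0=1$. Thus for $b\ge2$, $\operatorname{ord}_b(a)$ is the largest $k$ with $b^k\mid a$ and $\operatorname{ord}_b(0)=+\infty$; $\operatorname{ord}_0(a)=+\infty$ if $a=0$ and $0$ otherwise; $\operatorname{ord}_1(a)=+\infty$ for all $a$. For a nonempty $S\subseteq\mathbb{Z}$, an $S$-test sequence is any sequence $\mathbf{a}=(a_i)_{i\ge0}$ of elements of $S$ (repetitions allowed), and its $b$-exponent sequence is $\alpha_i(S,b,\mathbf{a}):=\sum_{j=0}^{i-1}\operatorname{ord}_b(a_i-a_j)$ (so $\alpha_0=0$). A $b$-ordering of $S$ is an infinite $S$-test sequence $\mathbf{a}=(a_i)_{i=0}^\infty$ such that for every $i\ge1$, $\sum_{j=0}^{i-1}\operatorname{ord}_b(a_i-a_j)=\min_{a'\in S}\sum_{j=0}^{i-1}\operatorname{ord}_b(a'-a_j)$ ($a_0\in S$ arbitrary). *)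

theory Defs
  imports Main "HOL-Library.Extended_Nat"
begin

text \<open>ord_b(a) = sup {k in N. a Z subset b^k Z}, i.e. sup {k. b^k dvd a}, in N union {infinity}.
  Note 0^0 = 1 in Isabelle.\<close>
definition ordb :: "int \<Rightarrow> int \<Rightarrow> enat" where
  "ordb b a = Sup {enat k | k. b ^ k dvd a}"

definition alpha :: "int \<Rightarrow> (nat \<Rightarrow> int) \<Rightarrow> nat \<Rightarrow> enat" where
  "alpha b a i = (\<Sum>j<i. ordb b (a i - a j))"

definition is_b_ordering :: "int set \<Rightarrow> int \<Rightarrow> (nat \<Rightarrow> int) \<Rightarrow> bool" where
  "is_b_ordering S b a \<longleftrightarrow> (\<forall>i. a i \<in> S) \<and>
     (\<forall>i\<ge>1. (\<Sum>j<i. ordb b (a i - a j)) = (INF a'\<in>S. (\<Sum>j<i. ordb b (a' - a j))))"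

end

theory Submission
  imports Defs
begin

lemma ordb_ge: "enat k \<le> ordb b a \<longleftrightarrow> b ^ k dvd a"
proof
  assume "b ^ k dvd a" then show "enat k \<le> ordb b a"
    unfolding ordb_def by (intro Sup_upper) blast
next
  assume h: "enat k \<le> ordb b a"
  show "b ^ k dvd a"
  proof (rule ccontr)
    assume nd: "\<not> b ^ k dvd a"
    have k0: "k \<noteq> 0" using nd by (metis power_0 one_dvd)
    have "ordb b a \<le> enat (k - 1)"
      unfolding ordb_def
    proof (rule Sup_least)
      fix x assume "x \<in> {enat k | k. b ^ k dvd a}"
      then obtain m where x: "x = enat m" and m: "b ^ m dvd a" by blast
      have "m < k"
      proof (rule ccontr)
        assume "\<not> m < k"
        then have "b ^ k dvd b ^ m" by (simp add: le_imp_power_dvd)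
        with m nd show False using dvd_trans by blast
      qed
      then show "x \<le> enat (k - 1)" using x by simp
    qed
    with h k0 show False by (cases "ordb b a") auto
  qed
qed

lemma enat_le_by_finite: "(\<And>k. enat k \<le> x \<Longrightarrow> enat k \<le> y) \<Longrightarrow> x \<le> (y::enat)"
proof (cases y)
  case (enat n)
  assume h: "\<And>k. enat k \<le> x \<Longrightarrow> enat k \<le> y"
  have "\<not> enat (Suc n) \<le> x" using h[of "Suc n"] enat by auto
  then show ?thesis using enat by (cases x) auto
qed simp

lemma ordb_sym: "ordb b (u - v) = ordb b (v - u)"
proof -
  have "{enat k | k. b ^ k dvd (u - v)} = {enat k | k. b ^ k dvd (v - u)}"
    by (metis dvd_diff_commute)
  then show ?thesis unfolding ordb_def by simp
qed

lemma ordb_ultra: "min (ordb b (u - v)) (ordb b (v - w)) \<le> ordb b (u - w)"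
proof (rule enat_le_by_finite)
  fix k assume "enat k \<le> min (ordb b (u - v)) (ordb b (v - w))"
  then have "b ^ k dvd (u - v)" "b ^ k dvd (v - w)" by (auto simp: ordb_ge)
  then have "b ^ k dvd ((u - v) + (v - w))" by (rule dvd_add)
  then show "enat k \<le> ordb b (u - w)" by (simp add: ordb_ge)
qed

lemma key:
  fixes d :: "'x \<Rightarrow> 'x \<Rightarrow> enat"
  assumes sym: "\<And>u v. d u v = d v u"
    and ult: "\<And>u v w. min (d u v) (d v w) \<le> d u w"
  shows "finite J \<Longrightarrow> finite I \<Longrightarrow> card J < card I \<Longrightarrow>
    \<exists>m\<in>I. (\<Sum>j\<in>J. d (y m) (a j)) \<le> (\<Sum>i\<in>I-{m}. d (y m) (y i))"
proof (induction J arbitrary: I rule: finite_induct)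
  case empty
  then have "I \<noteq> {}" by auto
  then show ?case by auto
next
  case (insert j0 J I)
  have Ine: "I \<noteq> {}" using insert by auto
  define M where "M = Max ((\<lambda>i. d (y i) (a j0)) ` I)"
  have "M \<in> (\<lambda>i. d (y i) (a j0)) ` I" unfolding M_def using insert Ine by (intro Max_in) auto
  then obtain i0 where i0: "i0 \<in> I" "d (y i0) (a j0) = M" by auto
  have imax: "d (y i) (a j0) \<le> d (y i0) (a j0)" if "i \<in> I" for i
    using i0 that insert(4) unfolding M_def by auto
  have "card J < card (I - {i0})" using insert i0 by auto
  then obtain m where m: "m \<in> I - {i0}"
    and le: "(\<Sum>j\<in>J. d (y m) (a j)) \<le> (\<Sum>i\<in>I - {i0} - {m}. d (y m) (y i))"
    using insert.IH[of "I - {i0}"] insert by auto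
  have c: "d (y m) (a j0) \<le> d (y m) (y i0)"
  proof -
    have "min (d (y m) (a j0)) (d (a j0) (y i0)) \<le> d (y m) (y i0)" by (rule ult)
    moreover have "d (y m) (a j0) \<le> d (a j0) (y i0)"
      using imax[of m] m sym by auto
    ultimately show ?thesis by simp
  qed
  have "(\<Sum>j\<in>insert j0 J. d (y m) (a j)) = d (y m) (a j0) + (\<Sum>j\<in>J. d (y m) (a j))"
    using insert by simp
  also have "\<dots> \<le> d (y m) (y i0) + (\<Sum>i\<in>I - {i0} - {m}. d (y m) (y i))"
    using c le by (rule add_mono)
  also have "\<dots> = (\<Sum>i\<in>I - {m}. d (y m) (y i))"
  proof -
    have "I - {i0} - {m} = (I - {m}) - {i0}" by auto
    moreover have "i0 \<in> I - {m}" using m i0 by auto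
    ultimately show ?thesis using insert(4) by (simp add: sum.remove)
  qed
  finally show ?case using m by auto
qed

definition En :: "('x \<Rightarrow> 'x \<Rightarrow> enat) \<Rightarrow> (nat \<Rightarrow> 'x) \<Rightarrow> nat set \<Rightarrow> enat" where
  "En d y I = (\<Sum>j\<in>I. \<Sum>i\<in>I. if i < j then d (y i) (y j) else 0)"

lemma En_remove:
  fixes d :: "'x \<Rightarrow> 'x \<Rightarrow> enat"
  assumes sym: "\<And>u v. d u v = d v u" and fin: "finite I" and mI: "m \<in> I"
  shows "En d y I = En d y (I - {m}) + (\<Sum>i\<in>I-{m}. d (y i) (y m))"
proof -
  let ?f = "\<lambda>i j. if i < j then d (y i) (y j) else 0"
  have "En d y I = (\<Sum>j\<in>I-{m}. \<Sum>i\<in>I. ?f i j) + (\<Sum>i\<in>I. ?f i m)"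
    unfolding En_def using sum.remove[OF fin mI, of "\<lambda>j. \<Sum>i\<in>I. ?f i j"] by (simp add: add.commute)
  also have "(\<Sum>j\<in>I-{m}. \<Sum>i\<in>I. ?f i j) = (\<Sum>j\<in>I-{m}. ?f m j + (\<Sum>i\<in>I-{m}. ?f i j))"
  proof (intro sum.cong refl)
    fix j assume "j \<in> I - {m}"
    show "(\<Sum>i\<in>I. ?f i j) = ?f m j + (\<Sum>i\<in>I-{m}. ?f i j)"
      using sum.remove[OF fin mI, of "\<lambda>i. ?f i j"] by simp
  qed
  also have "\<dots> = (\<Sum>j\<in>I-{m}. ?f m j) + En d y (I - {m})"
    unfolding En_def by (simp add: sum.distrib)
  also have "(\<Sum>i\<in>I. ?f i m) = (\<Sum>i\<in>I-{m}. ?f i m)"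
    using sum.remove[OF fin mI, of "\<lambda>i. ?f i m"] by simp
  finally have "En d y I = En d y (I - {m}) + ((\<Sum>j\<in>I-{m}. ?f m j) + (\<Sum>i\<in>I-{m}. ?f i m))"
    by (simp add: algebra_simps)
  also have "(\<Sum>j\<in>I-{m}. ?f m j) + (\<Sum>i\<in>I-{m}. ?f i m) = (\<Sum>i\<in>I-{m}. ?f m i + ?f i m)"
    by (simp add: sum.distrib)
  also have "\<dots> = (\<Sum>i\<in>I-{m}. d (y i) (y m))"
    by (intro sum.cong) (auto simp: sym)
  finally show ?thesis .
qed

lemma En_prefix:
  fixes d :: "'x \<Rightarrow> 'x \<Rightarrow> enat"
  assumes sym: "\<And>u v. d u v = d v u"
  shows "En d a {..<n} = (\<Sum>k<n. \<Sum>j<k. d (a k) (a j))"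
proof (induction n)
  case 0 then show ?case by (simp add: En_def)
next
  case (Suc n)
  have "En d a {..<Suc n} = En d a ({..<Suc n} - {n}) + (\<Sum>i\<in>{..<Suc n}-{n}. d (a i) (a n))"
    by (rule En_remove) (auto simp: sym)
  also have "{..<Suc n} - {n} = {..<n}" by auto
  finally show ?case using Suc by (simp add: sym)
qed

definition Pa :: "int \<Rightarrow> (nat \<Rightarrow> int) \<Rightarrow> nat \<Rightarrow> enat" where
  "Pa b a n = (\<Sum>k<n. alpha b a k)"

lemma lower:
  assumes ord: "is_b_ordering S b a"
  shows "finite I \<Longrightarrow> card I = n \<Longrightarrow> (\<forall>i\<in>I. y i \<in> S) \<Longrightarrow>
    Pa b a n \<le> En (\<lambda>u v. ordb b (u - v)) y I"
proof (induction n arbitrary: I)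
  case 0 then show ?case by (simp add: Pa_def)
next
  case (Suc n)
  let ?d = "\<lambda>u v. ordb b (u - v)"
  have sym: "\<And>u v. ?d u v = ?d v u" by (rule ordb_sym)
  have ult: "\<And>u v w. min (?d u v) (?d v w) \<le> ?d u w" by (rule ordb_ultra)
  obtain m where m: "m \<in> I"
    and mk: "(\<Sum>j\<in>{..<n}. ?d (y m) (a j)) \<le> (\<Sum>i\<in>I-{m}. ?d (y m) (y i))"
    using key[where d="\<lambda>u v. ordb b (u - v)", OF sym ult, where J="{..<n}" and I=I and y=y and a=a] Suc.prems by auto
  have an: "alpha b a n \<le> (\<Sum>j\<in>{..<n}. ?d (y m) (a j))"
  proof (cases "n = 0")
    case True then show ?thesis by (simp add: alpha_def)
  next
    case False
    then have "alpha b a n = (INF a'\<in>S. (\<Sum>j<n. ordb b (a' - a j)))"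
      using ord unfolding is_b_ordering_def alpha_def by auto
    also have "\<dots> \<le> (\<Sum>j<n. ordb b (y m - a j))"
      using Suc.prems m by (intro INF_lower) auto
    finally show ?thesis by simp
  qed
  have IH: "Pa b a n \<le> En ?d y (I - {m})"
    using Suc.IH[of "I - {m}"] Suc.prems m by auto
  have "Pa b a (Suc n) = Pa b a n + alpha b a n" by (simp add: Pa_def)
  also have "\<dots> \<le> En ?d y (I - {m}) + (\<Sum>i\<in>I-{m}. ?d (y m) (y i))"
    using IH an mk by (intro add_mono) auto
  also have "\<dots> = En ?d y I"
    using En_remove[where d="\<lambda>u v. ordb b (u - v)", OF sym, where I=I and m=m and y=y] Suc.prems m by (simp add: sym)
  finally show ?case .
qed

lemma Pa_eq_En:
  "Pa b a n = En (\<lambda>u v. ordb b (u - v)) a {..<n}"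
  unfolding Pa_def alpha_def by (subst En_prefix) (auto intro: ordb_sym)

lemma alpha_mono_Suc:
  assumes ord: "is_b_ordering S b a"
  shows "alpha b a i \<le> alpha b a (Suc i)"
proof (cases "i = 0")
  case True then show ?thesis by (simp add: alpha_def)
next
  case False
  then have "alpha b a i = (INF a'\<in>S. (\<Sum>j<i. ordb b (a' - a j)))"
    using ord unfolding is_b_ordering_def alpha_def by auto
  also have "\<dots> \<le> (\<Sum>j<i. ordb b (a (Suc i) - a j))"
    using ord unfolding is_b_ordering_def by (intro INF_lower) auto
  also have "\<dots> \<le> (\<Sum>j<Suc i. ordb b (a (Suc i) - a j))"
    by (intro sum_mono2) auto
  finally show ?thesis by (simp add: alpha_def)
qed

lemma alpha_mono:
  assumes ord: "is_b_ordering S b a" and "i \<le> k"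
  shows "alpha b a i \<le> alpha b a k"
  using assms(2) by (induction k) (auto intro: order_trans alpha_mono_Suc[OF ord] simp: le_Suc_eq)

lemma Pa_inf: "Pa b a n = \<infinity> \<Longrightarrow> \<exists>i<n. alpha b a i = \<infinity>"
proof (induction n)
  case 0 then show ?case by (simp add: Pa_def)
next
  case (Suc n)
  have "Pa b a (Suc n) = Pa b a n + alpha b a n" by (simp add: Pa_def)
  with Suc show ?case by (auto simp: plus_eq_infty_iff_enat less_Suc_eq)
qed

theorem theorem3p3:
  fixes S :: "int set" and b :: int and a1 a2 :: "nat \<Rightarrow> int"
  assumes "b \<ge> 0" and "S \<noteq> {}"
    and "is_b_ordering S b a1" and "is_b_ordering S b a2"
  shows "\<forall>i. alpha b a1 i = alpha b a2 i"
proof -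
  have PE: "Pa b a1 n = Pa b a2 n" for n
  proof (rule antisym)
    show "Pa b a1 n \<le> Pa b a2 n"
      unfolding Pa_eq_En[of b a2]
      using lower[OF assms(3), where I="{..<n}" and n=n and y=a2] assms(4) unfolding is_b_ordering_def by auto
    show "Pa b a2 n \<le> Pa b a1 n"
      unfolding Pa_eq_En[of b a1]
      using lower[OF assms(4), where I="{..<n}" and n=n and y=a1] assms(3) unfolding is_b_ordering_def by auto
  qed
  have "alpha b a1 n = alpha b a2 n" for n
  proof (cases "Pa b a1 n = \<infinity>")
    case True
    then obtain i where i: "i < n" "alpha b a1 i = \<infinity>" using Pa_inf by blast
    from True PE[of n] obtain i' where i': "i' < n" "alpha b a2 i' = \<infinity>" using Pa_inf by metis
    have "alpha b a1 n = \<infinity>" using alpha_mono[OF assms(3), of i n] i by auto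
    moreover have "alpha b a2 n = \<infinity>" using alpha_mono[OF assms(4), of i' n] i' by auto
    ultimately show ?thesis by simp
  next
    case False
    have "Pa b a1 n + alpha b a1 n = Pa b a1 n + alpha b a2 n"
      using PE[of "Suc n"] PE[of n] by (simp add: Pa_def)
    then show ?thesis using False by (simp add: enat_add_left_cancel)
  qed
  then show ?thesis by blast
qed

end
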